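(* Let $V$ be an $n$-dimensional vector space over a field of characteristic zero, $n\neq 4$, and let $A^{ab}$ and $B_{ab}$ be 2-forms with $\operatorname{rank}A\leq 4$. Let $T=T^a{}_b\{A,B\}=A^{ac}B_{bc}-\frac14 A^{cd}B_{cd}\delta^a_b$. Then $$\Bigl(T^2-\frac14[T^2]+\frac{1}{4(n-4)}[T]^2\Bigr)\Bigl(T-\frac{1}{n-4}[T]\Bigr)=0.$$
   Context: Index-free notation for $(1,1)$-tensors: products denote composition, $[X]=X^c{}_c$ is the trace, and a scalar term is understood as multiplied by the identity $\delta^a_b$. The rank of a 2-form $A^{ab}$ is the dimension of the subspace spanned by the vectors $A^{ab}\omega_b$ as $\omega$ ranges over the dual space (equivalently the least number of linearly independent vectors needed to construct $A$). No metric is assumed. *)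

theory Defs
  imports "HOL-Analysis.Analysis"
begin

text \<open>Matrices over a field represent tensors in a basis of V (dim V = CARD('n)).
  A 2-form A^{ab} (contravariant) and B_{ab} (covariant) are antisymmetric matrices.\<close>

definition skew :: "'a::field^'n^'n \<Rightarrow> bool" where
  "skew A \<longleftrightarrow> transpose A = - A"

definition form_rank :: "'a::field^'n^'n \<Rightarrow> nat" where
  "form_rank A = vec.dim (range (\<lambda>w. A *v w))"

definition Tmat :: "'a::field^'n^'n \<Rightarrow> 'a^'n^'n \<Rightarrow> 'a^'n^'n" where
  "Tmat A B = A ** transpose B - mat (trace (A ** transpose B) / 4)"

end

theory Submission
  imports Defs
begin

lemma mm_sub_l: "((X::'a::comm_ring_1^'k^'m) - Y) ** Z = X ** Z - Y ** Z"
  by (simp add: vec_eq_iff matrix_matrix_mult_def algebra_simps sum_subtractf)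
lemma mm_sub_r: "(X::'a::comm_ring_1^'k^'m) ** (Y - Z) = X ** Y - X ** Z"
  by (simp add: vec_eq_iff matrix_matrix_mult_def algebra_simps sum_subtractf)
lemma mm_add_l: "((X::'a::comm_ring_1^'k^'m) + Y) ** Z = X ** Z + Y ** Z"
  by (simp add: vec_eq_iff matrix_matrix_mult_def algebra_simps sum.distrib)
lemma mm_neg_l: "(-(X::'a::comm_ring_1^'k^'m)) ** Z = -(X ** Z)"
  by (simp add: vec_eq_iff matrix_matrix_mult_def sum_negf)
lemma mm_neg_r: "(X::'a::comm_ring_1^'k^'m) ** (- Z) = -(X ** Z)"
  by (simp add: vec_eq_iff matrix_matrix_mult_def sum_negf)
lemma transpose_neg: "transpose (-(X::'a::comm_ring_1^'k^'m)) = - transpose X"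
  by (simp add: vec_eq_iff transpose_def)
lemma mat_mm: "mat a ** (X::'a::comm_ring_1^'k^'m) = (\<chi> i j. a * X$i$j)"
  by (simp add: vec_eq_iff matrix_matrix_mult_def mat_def if_distrib if_distribR sum.delta cong: if_cong)
lemma mm_mat: "(X::'a::comm_ring_1^'k^'m) ** mat a = (\<chi> i j. X$i$j * a)"
  by (simp add: vec_eq_iff matrix_matrix_mult_def mat_def if_distrib if_distribR sum.delta' cong: if_cong)
lemma mat_comm: "(X::'a::comm_ring_1^'k^'m) ** mat a = mat a ** X"
  by (simp add: mat_mm mm_mat mult.commute)
lemma mat_mat: "mat a ** mat b = (mat (a * b) :: 'a::comm_ring_1^'n^'n)"
  unfolding mat_mm by (simp add: vec_eq_iff mat_def)
lemma trace_mat_mm: "trace (mat a ** (X::'a::comm_ring_1^'n^'n)) = a * trace X"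
  by (simp add: mat_mm trace_def sum_distrib_left)
lemma trace_mat: "trace (mat a :: 'a::comm_ring_1^'n^'n) = a * of_nat CARD('n)"
  by (simp add: trace_def mat_def)

lemma mv_axis: "(E::'a::comm_ring_1^'k^'m) *v axis j 1 = column j E"
  by (simp add: vec_eq_iff matrix_vector_mult_def column_def axis_def if_distrib cong: if_cong)

lemma skew_entries:
  assumes "skew (R::'a::field_char_0^4^4)"
  shows "R$1$1 = 0" "R$2$2 = 0" "R$3$3 = 0" "R$4$4 = 0"
    "R$2$1 = - R$1$2" "R$3$1 = - R$1$3" "R$4$1 = - R$1$4"
    "R$3$2 = - R$2$3" "R$4$2 = - R$2$4" "R$4$3 = - R$3$4"
proof -
  have h: "R$j$i = - R$i$j" for i j
  proof -
    have "transpose R $ i $ j = (-R) $ i $ j" using assms skew_def by metis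
    then show ?thesis by (simp add: transpose_def)
  qed
  have z: "\<And>i. R$i$i = 0" using h[of i i for i] by (simp add: equal_neg_zero)
  show "R$1$1 = 0" "R$2$2 = 0" "R$3$3 = 0" "R$4$4 = 0" by (rule z)+
  show "R$2$1 = - R$1$2" "R$3$1 = - R$1$3" "R$4$1 = - R$1$4"
    "R$3$2 = - R$2$3" "R$4$2 = - R$2$4" "R$4$3 = - R$3$4" by (rule h)+
qed

lemma four_poly:
  fixes R C :: "'a::field_char_0^4^4"
  assumes "skew R" "skew C"
  shows "mat 8 ** ((R ** C) ** (R ** C)) - mat (4 * trace (R ** C)) ** (R ** C)
      + mat (trace (R ** C) ^ 2 - 2 * trace ((R ** C) ** (R ** C))) = 0"
  using skew_entries[OF assms(1)] skew_entries[OF assms(2)]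
  apply (simp add: vec_eq_iff forall_4 matrix_matrix_mult_def sum_4 mat_def trace_def)
  apply (simp add: algebra_simps power2_eq_square)
  done


lemma mat_comm2: "(X::'a::comm_ring_1^'k^'m) ** (mat a ** Y) = mat a ** (X ** Y)"
  by (metis mat_comm matrix_mul_assoc)

lemma four_div:
  fixes R C :: "'a::field_char_0^4^4"
  assumes "skew R" "skew C"
  defines "N \<equiv> R ** C"
  shows "N ** N - mat (trace N / 2) ** N + mat (trace N ^ 2 / 8 - trace (N ** N) / 4) = 0"
proof -
  define Q where "Q = mat 8 ** (N ** N) - mat (4 * trace N) ** N
      + mat (trace N ^ 2 - 2 * trace (N ** N))"
  have P: "Q = 0"
    using four_poly[OF assms(1,2)] unfolding N_def Q_def .
  show ?thesis
  proof (rule vec_eq_iff[THEN iffD2], intro allI, rule vec_eq_iff[THEN iffD2], intro allI)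
    fix i j
    have "Q $ i $ j = 0" using P by simp
    then show "(N ** N - mat (trace N / 2) ** N + mat (trace N ^ 2 / 8 - trace (N ** N) / 4)) $ i $ j = 0 $ i $ j"
      unfolding Q_def mat_mm
      apply (simp add: mat_def field_simps split: if_splits)
      apply (drule arg_cong[where f="\<lambda>x. 2 * x" and x="_ + _"])
      apply (simp add: algebra_simps)
      done
  qed
qed

lemma reduce:
  fixes M :: "'a::field_char_0^'n^'n" and E :: "'a^'k^'n" and K :: "'a^'n^'k"
  assumes "M = E ** K" "K ** E = N"
    and Z: "N ** N - mat (trace N / 2) ** N + mat (trace N ^ 2 / 8 - trace (N ** N) / 4) = 0"
  shows "(M ** M - mat (trace M / 2) ** M + mat (trace M ^ 2 / 8 - trace (M ** M) / 4)) ** M = 0"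
proof -
  have KE: "K ** (E ** X) = N ** X" for X :: "'a^'j^'k"
    by (simp add: matrix_mul_assoc assms(2))
  have t1: "trace M = trace N" using assms(1,2) trace_mul_sym by metis
  have MM: "M ** M = E ** (N ** K)" using assms(1) by (simp add: matrix_mul_assoc[symmetric] KE)
  have t2: "trace (M ** M) = trace (N ** N)"
  proof -
    have "trace (E ** (N ** K)) = trace ((N ** K) ** E)" by (rule trace_mul_sym)
    also have "\<dots> = trace (N ** N)" by (simp add: matrix_mul_assoc[symmetric] assms(2))
    finally show ?thesis unfolding MM .
  qed
  define a where "a = trace N / 2"
  define c where "c = trace N ^ 2 / 8 - trace (N ** N) / 4"
  have "(M ** M - mat a ** M + mat c) ** M = E ** ((N ** N - mat a ** N + mat c) ** K)"
    unfolding mm_add_l mm_sub_l mm_sub_r matrix_add_ldistrib assms(1)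
    by (simp add: matrix_mul_assoc[symmetric] KE mat_comm2)
  also have "\<dots> = 0" using Z unfolding a_def c_def by simp
  finally show ?thesis unfolding t1 t2 a_def c_def .
qed


lemma decomp:
  fixes A :: "'a::field_char_0^'n^'n"
  assumes sk: "skew A" and rk: "form_rank A \<le> 4"
  shows "\<exists>(E::'a^4^'n) (R::'a^4^4). skew R \<and> A = E ** R ** transpose E"
proof -
  define W where "W = range (\<lambda>w. A *v w)"
  obtain Bs where Bs: "Bs \<subseteq> W" "vec.independent Bs" "W \<subseteq> vec.span Bs" "card Bs = vec.dim W"
    using vec.basis_exists by blast
  have fin: "finite Bs" using Bs(2) vec.finiteI_independent by blast
  have "card Bs \<le> card (UNIV :: 4 set)" using Bs(4) rk unfolding form_rank_def W_def by simp
  then obtain g :: "'a^'n \<Rightarrow> 4" where g: "inj_on g Bs"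
    using card_le_inj[OF fin, of "UNIV :: 4 set"] by auto
  define E :: "'a^4^'n" where "E = (\<chi> a j. if j \<in> g ` Bs then (inv_into Bs g j) $ a else 0)"
  obtain Q :: "'a^'n \<Rightarrow> 'a^4" where Q: "Vector_Spaces.linear (*s) (*s) Q" "\<forall>x\<in>Bs. Q x = axis (g x) 1"
    using vec.linear_independent_extend[OF Bs(2), of "\<lambda>x. axis (g x) (1::'a)"] by blast
  define P where "P = matrix Q"
  have PQ: "P *v x = Q x" for x unfolding P_def using matrix_works[OF Q(1)] .
  have Eb: "(E ** P) *v b = b" if "b \<in> Bs" for b
  proof -
    have "(E ** P) *v b = E *v axis (g b) 1"
      by (simp add: matrix_vector_mul_assoc[symmetric] PQ Q(2) that)
    also have "\<dots> = b"
      unfolding mv_axis using that g by (simp add: column_def E_def vec_eq_iff)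
    finally show ?thesis .
  qed
  have EP: "(E ** P) *v y = y" if "y \<in> vec.span Bs" for y
    using vec.linear_eq_on[OF matrix_vector_mul_linear_gen vec.linear_id that, of "E ** P"] Eb
    by simp
  have A1: "A = E ** P ** A"
  proof (rule matrix_eq[THEN iffD2], intro allI)
    fix x
    have "A *v x \<in> vec.span Bs" using Bs(3) unfolding W_def by blast
    then show "A *v x = (E ** P ** A) *v x"
      by (metis EP matrix_vector_mul_assoc)
  qed
  have At: "transpose A = - A" using sk skew_def by blast
  have A2: "A = A ** transpose P ** transpose E"
  proof -
    have "transpose A = transpose (E ** P ** A)" using A1 by simp
    then have "- A = - A ** transpose P ** transpose E"
      by (simp add: matrix_transpose_mul At matrix_mul_assoc)
    then show ?thesis by (simp add: mm_neg_l)
  qed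
  define R where "R = P ** A ** transpose P"
  have "skew R" unfolding skew_def R_def
    by (simp add: matrix_transpose_mul At mm_neg_l mm_neg_r matrix_mul_assoc)
  moreover have "A = E ** R ** transpose E"
    unfolding R_def using A1 A2 by (metis matrix_mul_assoc)
  ultimately show ?thesis by blast
qed


lemma Tpart:
  fixes M :: "'a::field_char_0^'n^'n"
  assumes n4: "CARD('n) \<noteq> 4"
  shows "(let T = M - mat (trace M / 4); n = (of_nat CARD('n) :: 'a) in
          (T ** T - mat (trace (T ** T) / 4) + mat (trace T ^ 2 / (4 * (n - 4))))
          ** (T - mat (trace T / (n - 4))))
       = (M ** M - mat (trace M / 2) ** M + mat (trace M ^ 2 / 8 - trace (M ** M) / 4)) ** M"
proof -
  define n where "n = (of_nat CARD('n) :: 'a)"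
  define t where "t = trace M"
  define T where "T = M - mat (t / 4)"
  have nz: "n - 4 \<noteq> 0"
  proof
    assume "n - 4 = 0"
    then have "(of_nat CARD('n) :: 'a) = of_nat 4" unfolding n_def by simp
    then show False using n4 by (simp only: of_nat_eq_iff)
  qed
  have trT: "trace T = t - t / 4 * n" unfolding T_def n_def t_def by (simp add: trace_sub trace_mat)
  have q: "trace T / (n - 4) = - (t / 4)" using nz unfolding trT by (simp add: field_simps)
  have F2: "T - mat (trace T / (n - 4)) = M" unfolding q unfolding T_def by (simp add: vec_eq_iff mat_def)
  have TT: "T ** T = M ** M - mat (t / 2) ** M + mat (t ^ 2 / 16)"
    unfolding T_def mm_sub_l mm_sub_r mat_mat mm_mat mat_mm
    by (simp add: vec_eq_iff mat_def algebra_simps power2_eq_square)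
  have trTT: "trace (T ** T) = trace (M ** M) - t / 2 * t + t ^ 2 / 16 * n"
    unfolding TT n_def t_def by (simp add: trace_sub trace_add trace_mat_mm trace_mat)
  have sc: "t ^ 2 / 16 - trace (T ** T) / 4 + trace T ^ 2 / (4 * (n - 4)) = t ^ 2 / 8 - trace (M ** M) / 4"
    using nz unfolding trTT trT by (simp add: field_simps power2_eq_square) 
  have F1: "T ** T - mat (trace (T ** T) / 4) + mat (trace T ^ 2 / (4 * (n - 4)))
     = M ** M - mat (t / 2) ** M + mat (t ^ 2 / 8 - trace (M ** M) / 4)"
    unfolding TT sc[symmetric] by (simp add: vec_eq_iff mat_def algebra_simps)
  have G: "(T ** T - mat (trace (T ** T) / 4) + mat (trace T ^ 2 / (4 * (n - 4))))
          ** (T - mat (trace T / (n - 4))) = (M ** M - mat (t / 2) ** M + mat (t ^ 2 / 8 - trace (M ** M) / 4)) ** M"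
    by (simp only: F1 F2)
  show ?thesis unfolding Let_def using G unfolding T_def n_def t_def .
qed

theorem theorem5:
  fixes A B :: "'a::field_char_0^'n^'n"
  assumes "CARD('n) \<noteq> 4"
    and "skew A" and "skew B"
    and "form_rank A \<le> 4"
  shows "(let T = Tmat A B; n = (of_nat CARD('n) :: 'a) in
          (T ** T - mat (trace (T ** T) / 4) + mat (trace T ^ 2 / (4 * (n - 4))))
          ** (T - mat (trace T / (n - 4))) = 0)"
proof -
  obtain E :: "'a^4^'n" and R where R: "skew R" and AE: "A = E ** R ** transpose E"
    using decomp[OF assms(2,4)] by blast
  define C where "C = transpose E ** transpose B ** E"
  have Bt: "transpose B = - B" using assms(3) skew_def by blast
  have "skew C" unfolding skew_def C_def
    by (simp add: matrix_transpose_mul Bt mm_neg_l mm_neg_r matrix_mul_assoc transpose_neg)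
  define K where "K = R ** transpose E ** transpose B"
  have M: "A ** transpose B = E ** K" unfolding AE K_def by (simp add: matrix_mul_assoc)
  have KE: "K ** E = R ** C" unfolding K_def C_def by (simp add: matrix_mul_assoc)
  have "(let T = Tmat A B; n = (of_nat CARD('n) :: 'a) in
          (T ** T - mat (trace (T ** T) / 4) + mat (trace T ^ 2 / (4 * (n - 4))))
          ** (T - mat (trace T / (n - 4))))
     = (let M = A ** transpose B in (M ** M - mat (trace M / 2) ** M + mat (trace M ^ 2 / 8 - trace (M ** M) / 4)) ** M)"
    unfolding Tmat_def Let_def[of "A ** transpose B"] by (rule Tpart[OF assms(1)])
  also have "\<dots> = 0" unfolding Let_def
    by (rule reduce[OF M KE four_div[OF R \<open>skew C\<close>]])
  finally show ?thesis by (simp only: Let_def)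
qed

end
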